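(* For a Borel probability measure $\pi$ on $[0,1]$ let $V_\infty(\pi)=\pi((1/2,1])+\tfrac12\pi(\{1/2\})$. For feasible $(\mu,\nu)$ (i.e. $0\le\mu\le1$, $\mu^2\le\nu\le\mu$) let $U_\infty(\mu,\nu)=\sup_{\pi\in\mathcal M(\mu,\nu)}V_\infty(\pi)$ and $L_\infty(\mu,\nu)=\inf_{\pi\in\mathcal M(\mu,\nu)}V_\infty(\pi)$. Define $G(1/2,1/4)=1/2$ and, for every other feasible $(\mu,\nu)$, \[ G(\mu,\nu)=\begin{cases}\dfrac{\nu-\mu^2}{\nu+1/4-\mu},&\mu\le1/2\text{ and }\nu\le\mu/2,\\[6pt] \min\{1,\,3\mu-2\nu\},&\text{otherwise}.\end{cases} \] Then for every feasible $(\mu,\nu)$, $U_\infty(\mu,\nu)=G(\mu,\nu)$ and $L_\infty(\mu,\nu)=1-G(1-\mu,\,1-2\mu+\nu)$.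
   Context: $\mathcal M(\mu,\nu)$ denotes the set of Borel probability measures $\pi$ on $[0,1]$ with $\int q\,d\pi(q)=\mu$ and $\int q^2\,d\pi(q)=\nu$. (The supremum and infimum need not be attained.) *)

theory Defs
  imports "HOL-Probability.Probability"
begin

definition Mset :: "real \<Rightarrow> real \<Rightarrow> real measure set" where
  "Mset \<mu> \<nu> = {M. sets M = sets (restrict_space borel {0..1}) \<and> prob_space M \<and>
      (\<integral>q. q \<partial>M) = \<mu> \<and> (\<integral>q. q\<^sup>2 \<partial>M) = \<nu>}"

definition V_inf :: "real measure \<Rightarrow> real" where
  "V_inf M = measure M {1/2<..1} + 1/2 * measure M {1/2}"

definition feasible :: "real \<Rightarrow> real \<Rightarrow> bool" where
  "feasible \<mu> \<nu> \<longleftrightarrow> 0 \<le> \<mu> \<and> \<mu> \<le> 1 \<and> \<mu>\<^sup>2 \<le> \<nu> \<and> \<nu> \<le> \<mu>"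

definition U_inf :: "real \<Rightarrow> real \<Rightarrow> real" where
  "U_inf \<mu> \<nu> = (SUP M\<in>Mset \<mu> \<nu>. V_inf M)"

definition L_inf :: "real \<Rightarrow> real \<Rightarrow> real" where
  "L_inf \<mu> \<nu> = (INF M\<in>Mset \<mu> \<nu>. V_inf M)"

definition G :: "real \<Rightarrow> real \<Rightarrow> real" where
  "G \<mu> \<nu> = (if \<mu> = 1/2 \<and> \<nu> = 1/4 then 1/2
     else if \<mu> \<le> 1/2 \<and> \<nu> \<le> \<mu>/2 then (\<nu> - \<mu>\<^sup>2) / (\<nu> + 1/4 - \<mu>)
     else min 1 (3*\<mu> - 2*\<nu>))"

end

theory Submission
  imports Defs
begin

definition hV :: "real \<Rightarrow> real" where
  "hV q = indicator {1/2<..1} q + 1/2 * indicator {1/2::real} q"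

abbreviation "R01 \<equiv> restrict_space (borel::real measure) {0..1}"

lemma hV_meas[measurable]: "hV \<in> borel_measurable borel"
  unfolding hV_def by measurable

lemma meas_R01: "f \<in> borel_measurable borel \<Longrightarrow> f \<in> borel_measurable R01"
  by (rule measurable_restrict_space1)

lemma meas_M: "f \<in> borel_measurable borel \<Longrightarrow> sets M = sets R01 \<Longrightarrow> f \<in> borel_measurable M"
  using measurable_cong_sets[of M R01 borel borel] meas_R01 by auto

lemma space_R01: "sets M = sets R01 \<Longrightarrow> space M = {0..1}"
  using sets_eq_imp_space_eq[of M R01] by (simp add: space_restrict_space)

lemma int_M:
  fixes f :: "real \<Rightarrow> real"
  assumes "sets M = sets R01" "finite_measure M" "f \<in> borel_measurable borel" "\<And>q. q \<in> {0..1} \<Longrightarrow> \<bar>f q\<bar> \<le> B"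
  shows "integrable M f"
  apply (rule finite_measure.integrable_const_bound[OF assms(2), of _ B])
  using assms space_R01[OF assms(1)] meas_M[OF assms(3,1)] by (auto intro!: AE_I2)

lemma V_int:
  assumes "sets M = sets R01" "finite_measure M"
  shows "V_inf M = integral\<^sup>L M hV"
proof -
  have sp: "space M = {0..1}" using space_R01[OF assms(1)] .
  have m1: "indicat_real {1/2<..1} \<in> borel_measurable M"
    by (rule meas_M[OF _ assms(1)]) simp
  have m2: "indicat_real {1/2} \<in> borel_measurable M"
    by (rule meas_M[OF _ assms(1)]) simp
  have "integral\<^sup>L M hV = integral\<^sup>L M (indicator {1/2<..1}) + integral\<^sup>L M (\<lambda>q. 1/2 * indicat_real {1/2} q)"
    unfolding hV_def
    apply (rule Bochner_Integration.integral_add)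
    subgoal by (rule int_M[OF assms, of _ 1]) (auto simp: indicator_def)
    subgoal by (rule int_M[OF assms, of _ 1]) (auto simp: indicator_def)
    done
  also have "\<dots> = V_inf M"
    unfolding V_inf_def Bochner_Integration.integral_indicator integral_mult_right_zero sp
    by (simp add: Int_absorb2 subset_eq)
  finally show ?thesis by simp
qed

lemma prob_fin: "prob_space M \<Longrightarrow> finite_measure M"
  by (simp add: prob_space_def)

lemma Mset_D:
  assumes "M \<in> Mset \<mu> \<nu>"
  shows "sets M = sets R01" "prob_space M" "finite_measure M" "(\<integral>q. q \<partial>M) = \<mu>" "(\<integral>q. q\<^sup>2 \<partial>M) = \<nu>"
    "space M = {0..1}"
  using assms prob_fin space_R01 unfolding Mset_def by auto

lemma int_quad:
  assumes "M \<in> Mset \<mu> \<nu>"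
  shows "(\<integral>q. a + b*q + c*q\<^sup>2 \<partial>M) = a + b*\<mu> + c*\<nu>"
proof -
  note D = Mset_D[OF assms]
  have i1: "integrable M (\<lambda>q::real. q)" by (rule int_M[OF D(1,3), of _ 1]) auto
  have i2: "integrable M (\<lambda>q::real. q\<^sup>2)" by (rule int_M[OF D(1,3), of _ 1]) (auto simp: abs_square_le_1)
  have i0: "integrable M (\<lambda>q::real. a)" using D(3) by (rule finite_measure.integrable_const)
  have "(\<integral>q. a + b*q + c*q\<^sup>2 \<partial>M) = (\<integral>q. a + b*q \<partial>M) + (\<integral>q. c*q\<^sup>2 \<partial>M)"
    by (intro Bochner_Integration.integral_add Bochner_Integration.integrable_add integrable_mult_right i0 i1 i2)
  also have "(\<integral>q. a + b*q \<partial>M) = (\<integral>q. a \<partial>M) + (\<integral>q. b*q \<partial>M)"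
    by (intro Bochner_Integration.integral_add integrable_mult_right i0 i1)
  also have "(\<integral>q. a \<partial>M) = a" using prob_space.prob_space[OF D(2)] by simp
  also have "(\<integral>q. b*q \<partial>M) = b*\<mu>" using D(4) by simp
  also have "(\<integral>q. c*q\<^sup>2 \<partial>M) = c*\<nu>" using D(5) by simp
  finally show ?thesis .
qed

lemma V_le_quad:
  assumes "M \<in> Mset \<mu> \<nu>" "\<And>q. q \<in> {0..1} \<Longrightarrow> hV q \<le> a + b*q + c*q\<^sup>2"
  shows "V_inf M \<le> a + b*\<mu> + c*\<nu>"
proof -
  note D = Mset_D[OF assms(1)]
  have "V_inf M = integral\<^sup>L M hV" by (rule V_int[OF D(1,3)])
  also have "\<dots> \<le> (\<integral>q. a + b*q + c*q\<^sup>2 \<partial>M)"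
  proof (rule integral_mono)
    show "integrable M hV" by (rule int_M[OF D(1,3), of _ 1]) (auto simp: hV_def indicator_def)
    have "\<And>q. q \<in> {0..1} \<Longrightarrow> \<bar>a + b*q + c*q\<^sup>2\<bar> \<le> \<bar>a\<bar> + \<bar>b\<bar> + \<bar>c\<bar>"
    proof -
      fix q :: real assume q: "q \<in> {0..1}"
      have q1: "\<bar>q\<bar> \<le> 1" "\<bar>q\<^sup>2\<bar> \<le> 1" using q by (auto simp: abs_square_le_1)
      have "\<bar>b*q\<bar> \<le> \<bar>b\<bar>" unfolding abs_mult using q1 by (simp add: mult_left_le)
      moreover have "\<bar>c*q\<^sup>2\<bar> \<le> \<bar>c\<bar>" unfolding abs_mult using q1 by (simp add: mult_left_le del: abs_power2)
      ultimately show "\<bar>a + b*q + c*q\<^sup>2\<bar> \<le> \<bar>a\<bar> + \<bar>b\<bar> + \<bar>c\<bar>" by linarith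
    qed
    then show "integrable M (\<lambda>q. a + b*q + c*q\<^sup>2)" by (intro int_M[OF D(1,3)]) simp_all
    show "\<And>x. x \<in> space M \<Longrightarrow> hV x \<le> a + b*x + c*x\<^sup>2" using assms(2) D(6) by blast
  qed
  also have "\<dots> = a + b*\<mu> + c*\<nu>" by (rule int_quad[OF assms(1)])
  finally show ?thesis .
qed

lemma V_degen:
  assumes "M \<in> Mset (1/2) (1/4)"
  shows "V_inf M = 1/2"
proof -
  note D = Mset_D[OF assms]
  have "(\<integral>q. (q - 1/2)\<^sup>2 \<partial>M) = (\<integral>q. 1/4 + (-1)*q + 1*q\<^sup>2 \<partial>M)"
    by (rule Bochner_Integration.integral_cong) (simp_all add: power2_eq_square algebra_simps)
  also have "\<dots> = 0" using int_quad[OF assms, of "1/4" "-1" 1] by simp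
  finally have "(\<integral>q. (q - 1/2)\<^sup>2 \<partial>M) = 0" .
  moreover have "integrable M (\<lambda>q. (q - 1/2)\<^sup>2)"
  proof (rule int_M[OF D(1,3), of _ 1])
    fix q :: real assume "q \<in> {0..1}"
    then have "\<bar>q - 1/2\<bar> \<le> 1" by auto
    then show "\<bar>(q - 1/2)\<^sup>2\<bar> \<le> 1" by (simp add: abs_square_le_1)
  qed simp
  ultimately have "AE q in M. (q - 1/2)\<^sup>2 = 0"
    using integral_nonneg_eq_0_iff_AE[of M "\<lambda>q. (q - 1/2)\<^sup>2"] by (simp del: zero_eq_power2)
  then have ae: "AE q in M. hV q = 1/2"
    by (rule AE_mp) (auto intro!: AE_I2 simp: hV_def indicator_def)
  have "V_inf M = integral\<^sup>L M hV" by (rule V_int[OF D(1,3)])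
  also have "\<dots> = (\<integral>q. 1/2 \<partial>M)"
    apply (rule integral_cong_AE)
    subgoal by (rule meas_M[OF hV_meas D(1)])
    subgoal by simp
    subgoal by (rule ae)
    done
  also have "\<dots> = 1/2" using prob_space.prob_space[OF D(2)] by simp
  finally show ?thesis .
qed

definition reflM :: "real measure \<Rightarrow> real measure" where
  "reflM M = distr M R01 (\<lambda>q. 1 - q)"

lemma hV_refl: "q \<in> {0..1} \<Longrightarrow> hV (1 - q) = 1 - hV q"
  unfolding hV_def indicator_def by auto

lemma reflM:
  assumes "M \<in> Mset \<mu> \<nu>"
  shows "reflM M \<in> Mset (1 - \<mu>) (1 - 2*\<mu> + \<nu>)" "V_inf (reflM M) = 1 - V_inf M"
proof -
  note D = Mset_D[OF assms]
  have m: "(\<lambda>q::real. 1 - q) \<in> M \<rightarrow>\<^sub>M R01"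
    by (rule measurable_restrict_space2) (auto simp: D(6) intro: meas_M[OF _ D(1)])
  have s: "sets (reflM M) = sets R01" unfolding reflM_def by simp
  have p: "prob_space (reflM M)" unfolding reflM_def by (rule prob_space.prob_space_distr[OF D(2) m])
  have i: "integral\<^sup>L (reflM M) f = (\<integral>q. f (1 - q) \<partial>M)" if "f \<in> borel_measurable borel" for f :: "real \<Rightarrow> real"
    unfolding reflM_def by (rule integral_distr[OF m meas_R01[OF that]])
  have "(\<integral>q. q \<partial>reflM M) = (\<integral>q. 1 + (-1)*q + 0*q\<^sup>2 \<partial>M)"
    by (subst i) simp_all
  also have "\<dots> = 1 - \<mu>" using int_quad[OF assms, of 1 "-1" 0] by simp
  finally have e1: "(\<integral>q. q \<partial>reflM M) = 1 - \<mu>" .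
  have "(\<integral>q. q\<^sup>2 \<partial>reflM M) = (\<integral>q. 1 + (-2)*q + 1*q\<^sup>2 \<partial>M)"
    by (subst i) (simp_all add: power2_eq_square algebra_simps)
  also have "\<dots> = 1 - 2*\<mu> + \<nu>" using int_quad[OF assms, of 1 "-2" 1] by simp
  finally have e2: "(\<integral>q. q\<^sup>2 \<partial>reflM M) = 1 - 2*\<mu> + \<nu>" .
  show "reflM M \<in> Mset (1 - \<mu>) (1 - 2*\<mu> + \<nu>)" unfolding Mset_def using s p e1 e2 by blast
  have ih: "integrable M hV" by (rule int_M[OF D(1,3), of _ 1]) (auto simp: hV_def indicator_def)
  have "V_inf (reflM M) = integral\<^sup>L (reflM M) hV" by (rule V_int[OF s prob_fin[OF p]])
  also have "\<dots> = (\<integral>q. hV (1 - q) \<partial>M)" by (rule i[OF hV_meas])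
  also have "\<dots> = (\<integral>q. 1 - hV q \<partial>M)"
    by (rule Bochner_Integration.integral_cong) (simp_all add: D(6) hV_refl)
  also have "\<dots> = (\<integral>q. 1 \<partial>M) - integral\<^sup>L M hV"
    by (rule Bochner_Integration.integral_diff[OF finite_measure.integrable_const[OF D(3)] ih])
  also have "\<dots> = 1 - V_inf M" using prob_space.prob_space[OF D(2)] V_int[OF D(1,3)] by simp
  finally show "V_inf (reflM M) = 1 - V_inf M" .
qed

definition clamp01 :: "real \<Rightarrow> real" where "clamp01 x = max 0 (min 1 x)"

definition discM :: "real pmf \<Rightarrow> real measure" where
  "discM p = distr (measure_pmf p) R01 clamp01"

lemma discM:
  assumes A: "finite A" "A \<subseteq> {0..1}" "set_pmf p \<subseteq> A"
  shows "discM p \<in> Mset (\<Sum>a\<in>A. a * pmf p a) (\<Sum>a\<in>A. a\<^sup>2 * pmf p a)"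
    "V_inf (discM p) = (\<Sum>a\<in>A. hV a * pmf p a)"
proof -
  have m: "clamp01 \<in> measure_pmf p \<rightarrow>\<^sub>M R01"
    by (simp add: space_restrict_space clamp01_def)
  have s: "sets (discM p) = sets R01" unfolding discM_def by simp
  have pr: "prob_space (discM p)" unfolding discM_def
    by (rule prob_space.prob_space_distr[OF prob_space_measure_pmf m])
  have i: "integral\<^sup>L (discM p) f = (\<Sum>a\<in>A. f a * pmf p a)" if "f \<in> borel_measurable borel" for f :: "real \<Rightarrow> real"
  proof -
    have "integral\<^sup>L (discM p) f = (\<integral>x. f (clamp01 x) \<partial>measure_pmf p)"
      unfolding discM_def by (rule integral_distr[OF m meas_R01[OF that]])
    also have "\<dots> = (\<Sum>a\<in>A. f (clamp01 a) * pmf p a)"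
      by (rule integral_measure_pmf_real) (use A in auto)
    also have "\<dots> = (\<Sum>a\<in>A. f a * pmf p a)"
      by (rule sum.cong) (use A in \<open>auto simp: clamp01_def subset_eq\<close>)
    finally show ?thesis .
  qed
  show "discM p \<in> Mset (\<Sum>a\<in>A. a * pmf p a) (\<Sum>a\<in>A. a\<^sup>2 * pmf p a)"
    unfolding Mset_def using s pr i[of "\<lambda>q. q"] i[of "\<lambda>q. q\<^sup>2"] by simp
  show "V_inf (discM p) = (\<Sum>a\<in>A. hV a * pmf p a)"
    using V_int[OF s prob_fin[OF pr]] i[OF hV_meas] by simp
qed

lemma two_point:
  assumes "x \<noteq> y" "x \<in> {0..1}" "y \<in> {0..1}" "wx \<ge> 0" "wy \<ge> 0" "wx + wy = 1"
  shows "\<exists>M. M \<in> Mset (wx*x + wy*y) (wx*x\<^sup>2 + wy*y\<^sup>2) \<and> V_inf M = wx * hV x + wy * hV y"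
proof -
  define p where "p = pmf_of_list [(x,wx),(y,wy)]"
  have wf: "pmf_of_list_wf [(x,wx),(y,wy)]" using assms by (auto intro!: pmf_of_list_wfI)
  have px: "pmf p x = wx" and py: "pmf p y = wy"
    using assms unfolding p_def by (simp_all add: pmf_pmf_of_list[OF wf])
  have sp: "set_pmf p \<subseteq> {x,y}" unfolding p_def using set_pmf_of_list[OF wf] by simp
  show ?thesis
    using discM[of "{x,y}" p] sp assms px py by (intro exI[of _ "discM p"]) (simp add: algebra_simps)
qed

lemma three_point:
  assumes "0 < b" "b < 1" "w0 \<ge> 0" "wb \<ge> 0" "w1 \<ge> 0" "w0 + wb + w1 = 1"
  shows "\<exists>M. M \<in> Mset (wb*b + w1) (wb*b\<^sup>2 + w1) \<and> V_inf M = wb * hV b + w1"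
proof -
  define p where "p = pmf_of_list [(0,w0),(b,wb),(1,w1)]"
  have wf: "pmf_of_list_wf [(0,w0),(b,wb),(1,w1)]" using assms by (auto intro!: pmf_of_list_wfI)
  have p0: "pmf p 0 = w0" and pb: "pmf p b = wb" and p1: "pmf p 1 = w1"
    using assms unfolding p_def by (simp_all add: pmf_pmf_of_list[OF wf])
  have sp: "set_pmf p \<subseteq> {0,b,1}" unfolding p_def using set_pmf_of_list[OF wf] by simp
  have h: "hV 0 = 0" "hV 1 = 1" by (simp_all add: hV_def)
  show ?thesis
    using discM[of "{0,b,1}" p] sp assms p0 pb p1 h by (intro exI[of _ "discM p"]) (simp add: algebra_simps)
qed

lemma alg1: fixes t sg m :: real assumes "t > 0" "sg + t^2 > 0"
  shows "(t^2/(sg+t^2))*(m - sg/t) + (sg/(sg+t^2))*(m+t) = m"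
proof -
  have "(t^2/(sg+t^2))*(m - sg/t) + (sg/(sg+t^2))*(m+t) = (t^2*(m - sg/t) + sg*(m+t))/(sg+t^2)"
    by (simp add: add_divide_distrib)
  also have "t^2*(m - sg/t) = t^2*m - sg*t" using assms(1) by (simp add: power2_eq_square field_simps)
  also have "t^2*m - sg*t + sg*(m+t) = m*(sg+t^2)" by (simp add: algebra_simps)
  finally show ?thesis using assms(2) by simp
qed
lemma alg2: fixes t sg m :: real assumes "t > 0" "sg + t^2 > 0"
  shows "(t^2/(sg+t^2))*(m - sg/t)^2 + (sg/(sg+t^2))*(m+t)^2 = m^2 + sg"
proof -
  have "(t^2/(sg+t^2))*(m - sg/t)^2 + (sg/(sg+t^2))*(m+t)^2 = (t^2*(m - sg/t)^2 + sg*(m+t)^2)/(sg+t^2)"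
    by (simp add: add_divide_distrib)
  also have "t^2*(m - sg/t)^2 = (t*m - sg)^2" using assms(1) by (simp add: power2_eq_square field_simps)
  also have "(t*m - sg)^2 + sg*(m+t)^2 = (m^2 + sg) * (sg+t^2)" by (simp add: power2_eq_square algebra_simps)
  finally show ?thesis using assms(2) by simp
qed

lemma cantelli_point:
  assumes b: "1/2 < b" "b < 1" and mu: "0 \<le> \<mu>" "\<mu> < 1/2" and s: "0 \<le> \<nu> - \<mu>\<^sup>2" "\<nu> - \<mu>\<^sup>2 \<le> \<mu> * (1/2 - \<mu>)"
  shows "\<exists>M. M \<in> Mset \<mu> \<nu> \<and> V_inf M = (\<nu> - \<mu>\<^sup>2) / ((\<nu> - \<mu>\<^sup>2) + (b - \<mu>)\<^sup>2)"
proof -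
  define sg where "sg = \<nu> - \<mu>\<^sup>2"
  define t where "t = b - \<mu>"
  have t: "t > 0" "t \<ge> 1/2 - \<mu>" using b mu by (auto simp: t_def)
  have den: "sg + t\<^sup>2 > 0" using t s by (simp add: sg_def add_nonneg_pos)
  define a where "a = \<mu> - sg / t"
  define wa where "wa = t\<^sup>2 / (sg + t\<^sup>2)"
  define wb where "wb = sg / (sg + t\<^sup>2)"
  have "sg / t \<le> \<mu>"
  proof -
    have "sg \<le> \<mu> * t" using s t mu unfolding sg_def by (smt (verit) mult_left_mono)
    then show ?thesis using t by (simp add: divide_le_eq mult.commute)
  qed
  then have a0: "0 \<le> a" unfolding a_def by simp
  have sgt: "sg / t \<ge> 0" using s t by (simp add: sg_def)
  have a1: "a \<le> \<mu>" unfolding a_def using sgt by simp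
  have ab: "a \<noteq> b" using a1 b mu by auto
  have w: "wa \<ge> 0" "wb \<ge> 0" "wa + wb = 1" using den s
    by (auto simp: wa_def wb_def sg_def add_divide_distrib[symmetric])
  have bt: "b = \<mu> + t" by (simp add: t_def)
  have e1: "wa*a + wb*b = \<mu>"
    unfolding wa_def wb_def a_def bt using alg1[OF t(1) den] .
  have e2: "wa*a\<^sup>2 + wb*b\<^sup>2 = \<nu>"
    unfolding wa_def wb_def a_def bt using alg2[OF t(1) den] by (simp add: sg_def)
  have hva: "hV a = 0" using a1 mu by (simp add: hV_def)
  have hvb: "hV b = 1" using b by (simp add: hV_def)
  obtain M where "M \<in> Mset (wa*a + wb*b) (wa*a\<^sup>2 + wb*b\<^sup>2)" "V_inf M = wa * hV a + wb * hV b"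
    using two_point[OF ab _ _ w] a0 a1 mu b by auto
  then show ?thesis using e1 e2 hva hvb by (intro exI[of _ M]) (simp add: wb_def sg_def t_def)
qed

lemma tri_point:
  assumes b: "1/2 < b" "b < 1" and c: "\<mu> * b \<le> \<nu>" "\<nu> \<le> \<mu>" "\<mu> + (\<mu> - \<nu>)/b \<le> 1"
  shows "\<exists>M. M \<in> Mset \<mu> \<nu> \<and> V_inf M = \<mu> + (\<mu> - \<nu>)/b"
proof -
  define K where "K = \<mu> - \<nu>"
  have K: "K \<ge> 0" using c by (simp add: K_def)
  define wb where "wb = K/b + K/(1-b)"
  define w1 where "w1 = \<mu> - K/(1-b)"
  define w0 where "w0 = 1 - \<mu> - K/b"
  have b0: "b > 0" "1 - b > 0" using b by auto
  have w: "w0 \<ge> 0" "wb \<ge> 0" "w1 \<ge> 0" "w0 + wb + w1 = 1"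
  proof -
    show "w0 \<ge> 0" using c unfolding w0_def K_def by simp
    show "wb \<ge> 0" using K b0 unfolding wb_def by simp
    have "K \<le> \<mu> * (1 - b)" using c unfolding K_def by (simp add: algebra_simps)
    then show "w1 \<ge> 0" using b0 unfolding w1_def by (simp add: divide_le_eq mult.commute)
    show "w0 + wb + w1 = 1" unfolding w0_def wb_def w1_def by simp
  qed
  have r1: "K*b/(1-b) - K/(1-b) = - K"
  proof -
    have "K*b/(1-b) - K/(1-b) = (-K*(1-b))/(1-b)" by (simp add: diff_divide_distrib[symmetric] algebra_simps)
    also have "\<dots> = - K" using b0 by simp
    finally show ?thesis .
  qed
  have r2: "K*b\<^sup>2/(1-b) - K/(1-b) = - K*(1+b)"
  proof -
    have "K*b\<^sup>2/(1-b) - K/(1-b) = (-K*(1+b)*(1-b))/(1-b)" by (simp add: diff_divide_distrib[symmetric] algebra_simps power2_eq_square)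
    also have "\<dots> = - K*(1+b)" using b0 by simp
    finally show ?thesis .
  qed
  have e1: "wb*b + w1 = \<mu>"
  proof -
    have "wb*b + w1 = K + K*b/(1-b) + \<mu> - K/(1-b)" unfolding wb_def w1_def using b0
      by (simp add: algebra_simps)
    then show ?thesis using r1 by simp
  qed
  have e2: "wb*b\<^sup>2 + w1 = \<nu>"
  proof -
    have "wb*b\<^sup>2 + w1 = K*b + K*b\<^sup>2/(1-b) + \<mu> - K/(1-b)" unfolding wb_def w1_def using b0
      by (simp add: algebra_simps power2_eq_square)
    then show ?thesis using r2 by (simp add: K_def algebra_simps)
  qed
  have hvb: "hV b = 1" using b by (simp add: hV_def)
  obtain M where "M \<in> Mset (wb*b + w1) (wb*b\<^sup>2 + w1)" "V_inf M = wb * hV b + w1"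
    using three_point[OF b0(1) b(2) w] by auto
  moreover have "wb + w1 = \<mu> + (\<mu> - \<nu>)/b" unfolding wb_def w1_def K_def by simp
  ultimately show ?thesis using e1 e2 hvb by (intro exI[of _ M]) simp
qed

lemma alg3: fixes d sg :: real assumes d: "d > 0" and sg: "sg \<ge> 0"
  shows "((sg/d)^2 + sg) / ((d^2 + sg)/d)^2 = sg / (sg + d^2)"
proof -
  have p: "d^2 + sg > 0" using d sg by (simp add: add_pos_nonneg)
  have "(sg/d)^2 + sg = sg * (d^2 + sg) / d^2" using d by (simp add: field_simps power2_eq_square)
  moreover have "((d^2 + sg)/d)^2 = (d^2+sg)^2 / d^2" by (simp add: power_divide)
  ultimately have "((sg/d)^2 + sg) / ((d^2 + sg)/d)^2 = (sg * (d^2 + sg)) / (d^2+sg)^2"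
    using d by simp
  also have "\<dots> = sg / (d^2+sg)" using p by (simp add: power2_eq_square)
  finally show ?thesis by (simp add: add.commute)
qed
lemma alg4: fixes c k m n :: real
  shows "c^2/k + (-2*c/k)*m + (1/k)*n = ((m - c)^2 + (n - m^2))/k"
  by (simp add: power2_eq_square field_simps add_divide_distrib diff_divide_distrib)
lemma hq3: fixes q :: real assumes "0 \<le> q" "q \<le> 1" shows "(if q > 1/2 then 1 else if q = 1/2 then 1/2 else 0) \<le> 3*q - 2*q^2"
proof -
  have "q*(3 - 2*q) \<ge> 0" using assms by simp
  moreover have "q > 1/2 \<Longrightarrow> (2*q - 1)*(1 - q) \<ge> 0" using assms by simp
  ultimately show ?thesis by (auto simp: power2_eq_square algebra_simps)
qed

lemma hV_eq: "q \<in> {0..1} \<Longrightarrow> hV q = (if q > 1/2 then 1 else if q = 1/2 then 1/2 else 0)"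
  by (auto simp: hV_def indicator_def)

lemma V_ge0: "V_inf M \<ge> 0"
  unfolding V_inf_def by simp

lemma V_le1: "M \<in> Mset \<mu> \<nu> \<Longrightarrow> V_inf M \<le> 1"
  using V_le_quad[of M \<mu> \<nu> 1 0 0] by (simp add: hV_eq)

lemma V_le3: "M \<in> Mset \<mu> \<nu> \<Longrightarrow> V_inf M \<le> 3*\<mu> - 2*\<nu>"
  using V_le_quad[of M \<mu> \<nu> 0 3 "-2"] hq3 by (simp add: hV_eq)

lemma V_le_cant:
  assumes M: "M \<in> Mset \<mu> \<nu>" and mu: "\<mu> < 1/2" and s: "\<nu> - \<mu>\<^sup>2 \<ge> 0"
  shows "V_inf M \<le> (\<nu> - \<mu>\<^sup>2) / (\<nu> + 1/4 - \<mu>)"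
proof -
  define d where "d = 1/2 - \<mu>"
  define sg where "sg = \<nu> - \<mu>\<^sup>2"
  define c where "c = \<mu> - sg/d"
  define k where "k = (1/2 - c)\<^sup>2"
  have d: "d > 0" using mu by (simp add: d_def)
  have sg: "sg \<ge> 0" using s by (simp add: sg_def)
  have c12: "1/2 - c = (d\<^sup>2 + sg)/d" using d unfolding c_def d_def
    by (simp add: field_simps power2_eq_square)
  have cpos: "1/2 - c > 0" unfolding c12 using d sg by (simp add: add_pos_nonneg)
  have kpos: "k > 0" unfolding k_def using cpos by simp
  have "V_inf M \<le> c\<^sup>2/k + (-2*c/k)*\<mu> + (1/k)*\<nu>"
  proof (rule V_le_quad[OF M])
    fix q :: real assume q: "q \<in> {0..1}"
    have eq: "c\<^sup>2/k + (-2*c/k)*q + (1/k)*q\<^sup>2 = (q - c)\<^sup>2 / k"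
      by (simp add: power2_eq_square field_simps add_divide_distrib diff_divide_distrib)
    have "hV q \<le> (q - c)\<^sup>2 / k"
    proof (cases "q \<ge> 1/2")
      case True
      then have "1/2 - c \<le> q - c" by simp
      then have "(1/2 - c)\<^sup>2 \<le> (q - c)\<^sup>2" using cpos by (intro power_mono) auto
      then have "1 \<le> (q - c)\<^sup>2 / k" using kpos unfolding k_def by simp
      moreover have "hV q \<le> 1" using q by (simp add: hV_eq)
      ultimately show ?thesis by linarith
    next
      case False
      then have "hV q = 0" using q by (simp add: hV_eq)
      then show ?thesis using kpos by simp
    qed
    then show "hV q \<le> c\<^sup>2/k + (-2*c/k)*q + (1/k)*q\<^sup>2" using eq by simp
  qed
  also have "\<dots> = ((\<mu> - c)\<^sup>2 + sg)/k" unfolding sg_def by (rule alg4)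
  also have "\<mu> - c = sg/d" by (simp add: c_def)
  also have "((sg/d)\<^sup>2 + sg)/k = sg / (sg + d\<^sup>2)" unfolding k_def c12 by (rule alg3[OF d sg])
  also have "sg + d\<^sup>2 = \<nu> + 1/4 - \<mu>" unfolding sg_def d_def by (simp add: power2_eq_square algebra_simps)
  finally show ?thesis by (simp add: sg_def)
qed

lemma lim_arg:
  fixes \<phi> :: "real \<Rightarrow> real"
  assumes "b1 > 1/2" "\<And>b. 1/2 < b \<Longrightarrow> b < b1 \<Longrightarrow> \<phi> b \<le> U" "(\<phi> \<longlongrightarrow> L) (at_right (1/2))"
  shows "L \<le> U"
proof (rule tendsto_upperbound[OF assms(3)])
  show "\<forall>\<^sub>F b in at_right (1/2). \<phi> b \<le> U"
    unfolding eventually_at_right_field using assms(1,2) by blast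
qed simp

lemma U_eq:
  assumes f: "feasible \<mu> \<nu>"
  shows "U_inf \<mu> \<nu> = G \<mu> \<nu> \<and> Mset \<mu> \<nu> \<noteq> {}"
proof -
  have f': "0 \<le> \<mu>" "\<mu> \<le> 1" "\<mu>\<^sup>2 \<le> \<nu>" "\<nu> \<le> \<mu>" using f by (auto simp: feasible_def)
  have bdd: "bdd_above (V_inf ` Mset \<mu> \<nu>)" by (rule bdd_aboveI2[where M=1]) (rule V_le1)
  have up: "V_inf M \<le> U_inf \<mu> \<nu>" if "M \<in> Mset \<mu> \<nu>" for M
    unfolding U_inf_def by (rule cSUP_upper[OF that bdd])
  consider (A) "\<mu> = 1/2 \<and> \<nu> = 1/4" | (B) "\<not> (\<mu> = 1/2 \<and> \<nu> = 1/4)" "\<mu> \<le> 1/2 \<and> \<nu> \<le> \<mu>/2"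
    | (C) "\<not> (\<mu> = 1/2 \<and> \<nu> = 1/4)" "\<not> (\<mu> \<le> 1/2 \<and> \<nu> \<le> \<mu>/2)" by blast
  then have "Mset \<mu> \<nu> \<noteq> {} \<and> (\<forall>M\<in>Mset \<mu> \<nu>. V_inf M \<le> G \<mu> \<nu>) \<and> G \<mu> \<nu> \<le> U_inf \<mu> \<nu>"
  proof cases
    case A
    then have g: "G \<mu> \<nu> = 1/2" by (simp add: G_def)
    obtain M where M: "M \<in> Mset (1*(1/2) + 0*0) (1*(1/2)\<^sup>2 + 0*0\<^sup>2)" "V_inf M = 1 * hV (1/2) + 0 * hV 0"
      using two_point[of "1/2" 0 1 0] by auto
    have e: "\<mu> = 1/2" "\<nu> = 1/4" using A by auto
    have M': "M \<in> Mset \<mu> \<nu>" "V_inf M = 1/2" using M unfolding e by (simp_all add: hV_def power2_eq_square)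
    have 1: "Mset \<mu> \<nu> \<noteq> {}" using M'(1) by blast
    have 2: "\<forall>M\<in>Mset \<mu> \<nu>. V_inf M \<le> G \<mu> \<nu>"
    proof
      fix M assume "M \<in> Mset \<mu> \<nu>"
      then have "M \<in> Mset (1/2) (1/4)" unfolding e .
      then have "V_inf M = 1/2" by (rule V_degen)
      then show "V_inf M \<le> G \<mu> \<nu>" using g by linarith
    qed
    have 3: "G \<mu> \<nu> \<le> U_inf \<mu> \<nu>" using up[OF M'(1)] M'(2) g by simp
    show ?thesis using 1 2 3 by blast
  next
    case B
    have mu: "\<mu> < 1/2"
    proof (rule ccontr)
      assume "\<not> \<mu> < 1/2"
      then have m: "\<mu> = 1/2" using B by simp
      then have "\<mu>\<^sup>2 = 1/4" unfolding m by (simp add: power2_eq_square)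
      then have "\<nu> = 1/4" using B f' m by linarith
      then show False using B m by simp
    qed
    have g: "G \<mu> \<nu> = (\<nu> - \<mu>\<^sup>2) / (\<nu> + 1/4 - \<mu>)" using B by (simp add: G_def)
    have s0: "0 \<le> \<nu> - \<mu>\<^sup>2" using f' by simp
    have s1: "\<nu> - \<mu>\<^sup>2 \<le> \<mu> * (1/2 - \<mu>)" using B by (simp add: power2_eq_square algebra_simps)
    define \<phi> where "\<phi> b = (\<nu> - \<mu>\<^sup>2) / ((\<nu> - \<mu>\<^sup>2) + (b - \<mu>)\<^sup>2)" for b
    have pt: "\<exists>M. M \<in> Mset \<mu> \<nu> \<and> V_inf M = \<phi> b" if "1/2 < b" "b < 1" for b
      unfolding \<phi>_def by (rule cantelli_point[OF that f'(1) mu s0 s1])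
    have ne: "Mset \<mu> \<nu> \<noteq> {}" using pt[of "3/4"] by auto
    have le: "\<phi> b \<le> U_inf \<mu> \<nu>" if "1/2 < b" "b < 1" for b
      using pt[OF that] up by metis
    have den: "(\<nu> - \<mu>\<^sup>2) + (1/2 - \<mu>)\<^sup>2 \<noteq> 0" using s0 mu by (smt (verit) zero_less_power2)
    have lim: "(\<phi> \<longlongrightarrow> \<phi> (1/2)) (at_right (1/2))"
      unfolding \<phi>_def by (intro tendsto_intros den)
    have "\<phi> (1/2) = G \<mu> \<nu>" unfolding \<phi>_def g by (simp add: power2_eq_square algebra_simps)
    then have "G \<mu> \<nu> \<le> U_inf \<mu> \<nu>" using lim_arg[of 1 \<phi> "U_inf \<mu> \<nu>" "\<phi> (1/2)"] le lim by simp
    moreover have "\<forall>M\<in>Mset \<mu> \<nu>. V_inf M \<le> G \<mu> \<nu>" using V_le_cant[OF _ mu s0] g by simp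
    ultimately show ?thesis using ne by simp
  next
    case C
    have g: "G \<mu> \<nu> = min 1 (3*\<mu> - 2*\<nu>)" unfolding G_def by (simp only: if_not_P[OF C(1)] if_not_P[OF C(2)])
    have ub: "\<forall>M\<in>Mset \<mu> \<nu>. V_inf M \<le> G \<mu> \<nu>" using V_le1 V_le3 g by simp
    have nu: "\<nu> > \<mu>/2"
    proof (cases "\<mu> \<le> 1/2")
      case True then show ?thesis using C by simp
    next
      case False
      then have "\<mu> * (1/2) < \<mu> * \<mu>" by (intro mult_strict_left_mono) auto
      then show ?thesis using f' by (simp add: power2_eq_square)
    qed
    have mu0: "\<mu> > 0" using nu f' by simp
    show ?thesis
    proof (cases "3*\<mu> - 2*\<nu> \<le> 1")
      case True
      then have g': "G \<mu> \<nu> = 3*\<mu> - 2*\<nu>" using g by simp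
      define b1 where "b1 = min 1 (\<nu>/\<mu>)"
      have b1: "b1 > 1/2" unfolding b1_def using nu mu0 by (simp add: less_divide_eq)
      define \<phi> where "\<phi> b = \<mu> + (\<mu> - \<nu>)/b" for b
      have pt: "\<exists>M. M \<in> Mset \<mu> \<nu> \<and> V_inf M = \<phi> b" if b: "1/2 < b" "b < b1" for b
      proof -
        have "b < 1" "b < \<nu>/\<mu>" using b unfolding b1_def by auto
        then have c1: "\<mu> * b \<le> \<nu>" using mu0 by (simp add: less_divide_eq mult.commute)
        have "(\<mu> - \<nu>)/b \<le> (\<mu> - \<nu>)/(1/2)" using b f' by (intro divide_left_mono) auto
        then have c3: "\<mu> + (\<mu> - \<nu>)/b \<le> 1" using True by simp
        show ?thesis unfolding \<phi>_def by (rule tri_point[OF b(1) \<open>b < 1\<close> c1 f'(4) c3])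
      qed
      define bm where "bm = (1/2 + b1)/2"
      have ne: "Mset \<mu> \<nu> \<noteq> {}" using pt[of bm] b1 unfolding bm_def by auto
      have le: "\<phi> b \<le> U_inf \<mu> \<nu>" if "1/2 < b" "b < b1" for b
        using pt[OF that] up by metis
      have lim: "(\<phi> \<longlongrightarrow> \<phi> (1/2)) (at_right (1/2))"
        unfolding \<phi>_def by (intro tendsto_intros) simp
      have "\<phi> (1/2) = G \<mu> \<nu>" unfolding \<phi>_def g' by simp
      then have "G \<mu> \<nu> \<le> U_inf \<mu> \<nu>" using lim_arg[OF b1, of \<phi> "U_inf \<mu> \<nu>" "\<phi> (1/2)"] le lim by simp
      then show ?thesis using ne ub by simp
    next
      case False
      then have g': "G \<mu> \<nu> = 1" using g by simp
      have mu1: "\<mu> < 1"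
      proof (rule ccontr)
        assume "\<not> \<mu> < 1"
        then have "\<mu> = 1" using f' by simp
        then have "\<nu> = 1" using f' by simp
        then show False using False \<open>\<mu> = 1\<close> by simp
      qed
      define b0 where "b0 = (\<mu> - \<nu>)/(1 - \<mu>)"
      have b0a: "1/2 < b0" unfolding b0_def using mu1 False by (simp add: less_divide_eq)
      have "(1 - \<mu>)\<^sup>2 > 0" using mu1 by simp
      then have "\<mu> - \<nu> < 1 - \<mu>" using f' by (simp add: power2_eq_square algebra_simps)
      then have b0b: "b0 < 1" unfolding b0_def using mu1 by (simp add: divide_less_eq)
      have "\<mu> * (\<mu> - \<nu>) \<le> \<nu> * (1 - \<mu>)" using f' by (simp add: power2_eq_square algebra_simps)
      then have c1: "\<mu> * b0 \<le> \<nu>" unfolding b0_def using mu1 by (simp add: divide_le_eq mult.commute)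
      have mn: "\<mu> - \<nu> > 0" using False mu1 by linarith
      have c3: "\<mu> + (\<mu> - \<nu>)/b0 = 1" unfolding b0_def using mn mu1 by simp
      obtain M where "M \<in> Mset \<mu> \<nu>" "V_inf M = 1"
        using tri_point[OF b0a b0b c1 f'(4)] c3 by auto
      then show ?thesis using up ub g' by fastforce
    qed
  qed
  then have ne: "Mset \<mu> \<nu> \<noteq> {}" and ub: "\<And>M. M \<in> Mset \<mu> \<nu> \<Longrightarrow> V_inf M \<le> G \<mu> \<nu>"
    and lb: "G \<mu> \<nu> \<le> U_inf \<mu> \<nu>" by auto
  have "U_inf \<mu> \<nu> \<le> G \<mu> \<nu>" unfolding U_inf_def by (rule cSUP_least[OF ne ub])
  then show ?thesis using lb ne by simp
qed

theorem theorem3: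
  fixes \<mu> \<nu> :: real
  assumes "feasible \<mu> \<nu>"
  shows "U_inf \<mu> \<nu> = G \<mu> \<nu> \<and> L_inf \<mu> \<nu> = 1 - G (1 - \<mu>) (1 - 2*\<mu> + \<nu>)"
proof -
  define \<mu>' where "\<mu>' = 1 - \<mu>"
  define \<nu>' where "\<nu>' = 1 - 2*\<mu> + \<nu>"
  have f': "feasible \<mu>' \<nu>'" using assms unfolding feasible_def \<mu>'_def \<nu>'_def
    by (auto simp: power2_eq_square algebra_simps)
  have U1: "U_inf \<mu> \<nu> = G \<mu> \<nu>" and ne: "Mset \<mu> \<nu> \<noteq> {}" using U_eq[OF assms] by auto
  have U2: "U_inf \<mu>' \<nu>' = G \<mu>' \<nu>'" and ne': "Mset \<mu>' \<nu>' \<noteq> {}" using U_eq[OF f'] by auto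
  have hback: "Mset (1 - \<mu>') (1 - 2*\<mu>' + \<nu>') = Mset \<mu> \<nu>" unfolding \<mu>'_def \<nu>'_def
    by (simp add: algebra_simps)
  have bddU: "bdd_above (V_inf ` Mset \<mu>' \<nu>')" by (rule bdd_aboveI2[where M=1]) (rule V_le1)
  have bddL: "bdd_below (V_inf ` Mset \<mu> \<nu>)" by (rule bdd_belowI2[where m=0]) (rule V_ge0)
  have ge: "1 - G \<mu>' \<nu>' \<le> V_inf M" if M: "M \<in> Mset \<mu> \<nu>" for M
  proof -
    have "reflM M \<in> Mset \<mu>' \<nu>'" using reflM(1)[OF M] unfolding \<mu>'_def \<nu>'_def .
    then have "V_inf (reflM M) \<le> U_inf \<mu>' \<nu>'" unfolding U_inf_def by (rule cSUP_upper[OF _ bddU])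
    then show ?thesis using reflM(2)[OF M] U2 by simp
  qed
  have "G \<mu>' \<nu>' \<le> 1 - L_inf \<mu> \<nu>"
    unfolding U2[symmetric] U_inf_def
  proof (rule cSUP_least[OF ne'])
    fix M assume M: "M \<in> Mset \<mu>' \<nu>'"
    have "reflM M \<in> Mset \<mu> \<nu>" using reflM(1)[OF M] unfolding hback .
    then have "L_inf \<mu> \<nu> \<le> V_inf (reflM M)" unfolding L_inf_def by (rule cINF_lower[OF bddL])
    then show "V_inf M \<le> 1 - L_inf \<mu> \<nu>" using reflM(2)[OF M] by simp
  qed
  moreover have "1 - G \<mu>' \<nu>' \<le> L_inf \<mu> \<nu>" unfolding L_inf_def
    by (rule cINF_greatest[OF ne ge])
  ultimately have "L_inf \<mu> \<nu> = 1 - G \<mu>' \<nu>'" by simp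
  then show ?thesis using U1 unfolding \<mu>'_def \<nu>'_def by simp
qed

end
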